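(* Let $n\ge 5$. Suppose a group-testing measurement matrix $A$ for $\mathcal{G}^4_n$ distinguishes all binary vectors $x\in\{0,1\}^n$ having at most two ones, meaning that distinct such vectors give distinct outcome vectors. Then $A$ has at least $\lfloor n/4\rfloor$ rows.
   Context: $\mathcal{G}^4_n$ is the graph on $\{1,\dots,n\}$ in which each node $i$ is adjacent to $i\pm1$ and $i\pm2 \pmod n$. A group-testing measurement matrix for a graph $G$ on $\{1,\dots,n\}$ is a matrix $A\in\{0,1\}^{m\times n}$ in which every nonzero row has a support that induces a connected subgraph of $G$. Given $x\in\{0,1\}^n$, the outcome of row $i$ is the Boolean OR $\bigvee_{j:A_{ij}=1}x_j$. *)

theory Defs
  imports Main
begin

(* Vertices of G^4_n are 0..n-1 (representing 1..n, indices mod n). *)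
definition G4_adj :: "nat \<Rightarrow> nat \<Rightarrow> nat \<Rightarrow> bool" where
  "G4_adj n i j \<longleftrightarrow> i < n \<and> j < n \<and> i \<noteq> j \<and>
     ((j + n - i) mod n \<in> {1, 2, n - 1, n - 2})"

definition induces_connected :: "nat \<Rightarrow> nat set \<Rightarrow> bool" where
  "induces_connected n S \<longleftrightarrow> S \<noteq> {} \<and>
     (\<forall>u\<in>S. \<forall>v\<in>S. (u, v) \<in> {(a, b). a \<in> S \<and> b \<in> S \<and> G4_adj n a b}\<^sup>*)"

(* A 0/1 matrix with m rows and n columns, given as the list of row supports. *)
definition is_G4_measurement_matrix :: "nat \<Rightarrow> nat set list \<Rightarrow> bool" where
  "is_G4_measurement_matrix n A \<longleftrightarrow>
     (\<forall>R\<in>set A. R \<subseteq> {0..<n} \<and> (R \<noteq> {} \<longrightarrow> induces_connected n R))"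

(* A binary vector x is represented by its support X \<subseteq> {0..<n};
   the outcome of row R is the OR of x_j over j in R. *)
definition outcome :: "nat set list \<Rightarrow> nat set \<Rightarrow> bool list" where
  "outcome A X = map (\<lambda>R. \<exists>j\<in>R. j \<in> X) A"

definition distinguishes_le2 :: "nat \<Rightarrow> nat set list \<Rightarrow> bool" where
  "distinguishes_le2 n A \<longleftrightarrow>
     (\<forall>X Y. X \<subseteq> {0..<n} \<longrightarrow> Y \<subseteq> {0..<n} \<longrightarrow> card X \<le> 2 \<longrightarrow> card Y \<le> 2 \<longrightarrow>
        X \<noteq> Y \<longrightarrow> outcome A X \<noteq> outcome A Y)"

end

theory Submission
  imports Defs
begin

definition sc :: "nat \<Rightarrow> nat \<Rightarrow> nat" where "sc n t = (if Suc t < n then Suc t else 0)"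
definition pr :: "nat \<Rightarrow> nat \<Rightarrow> nat" where "pr n t = (if t = 0 then n - 1 else t - 1)"
definition off :: "nat \<Rightarrow> nat \<Rightarrow> nat \<Rightarrow> nat" where
  "off n p u = (if p \<le> u then u - p else u + n - p)"

lemma off_lt: "p < n \<Longrightarrow> u < n \<Longrightarrow> off n p u < n"
  unfolding off_def by auto

lemma off_inj: "p < n \<Longrightarrow> u < n \<Longrightarrow> w < n \<Longrightarrow> off n p u = off n p w \<Longrightarrow> u = w"
  unfolding off_def by (auto split: if_splits)

lemma off_shift: "p < n \<Longrightarrow> z < n \<Longrightarrow> w < n \<Longrightarrow>
   off n p w = (if off n p z + off n z w < n then off n p z + off n z w else off n p z + off n z w - n)"
  unfolding off_def by (auto split: if_splits)

lemma off_self: "off n p p = 0" unfolding off_def by simp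
lemma off_sc: "p < n \<Longrightarrow> q < n \<Longrightarrow> off n p q + 1 < n \<Longrightarrow> off n p (sc n q) = off n p q + 1"
  unfolding off_def sc_def by (auto split: if_splits)

lemma mod_off: "u < n \<Longrightarrow> v < n \<Longrightarrow> (v + n - u) mod n = off n u v"
proof (cases "u \<le> v")
  case True
  assume a: "u < n" "v < n"
  have "v + n - u = (v - u) + n" using True by simp
  then have "(v + n - u) mod n = (v - u) mod n" by simp
  also have "\<dots> = v - u" using a by simp
  finally show ?thesis using True by (simp add: off_def)
next
  case False
  assume a: "u < n" "v < n"
  then show ?thesis using False by (simp add: off_def)
qed

lemma adj_off: "G4_adj n u v \<Longrightarrow> u < n \<and> v < n \<and> off n u v \<in> {1, 2, n - 1, n - 2}"
  unfolding G4_adj_def using mod_off by metis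

lemma core:
  assumes conn: "induces_connected n R" and sub: "R \<subseteq> {0..<n}" and n5: "n \<ge> 5"
    and pq: "p < n" "q < n" and miss: "p \<notin> R" "sc n p \<notin> R" "q \<notin> R" "sc n q \<notin> R"
    and xy: "x \<in> R" "y \<in> R"
    and ox: "2 \<le> off n p x" "off n p x < off n p q"
    and oy: "off n p q + 1 < off n p y"
  shows False
proof -
  let ?E = "{(a, b). a \<in> R \<and> b \<in> R \<and> G4_adj n a b}"
  have yn: "y < n" using xy sub by auto
  have cn: "off n p q + 1 < n" using off_lt[OF pq(1) yn] oy by simp
  have m1: "off n p (sc n p) = 1" using off_sc[of p n p] pq n5 off_self[of n p] by simp
  have m2: "off n p (sc n q) = off n p q + 1" using off_sc[OF pq cn] .
  have "(x, y) \<in> ?E\<^sup>*" using conn xy unfolding induces_connected_def by blast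
  then have "y \<in> R \<and> 2 \<le> off n p y \<and> off n p y < off n p q"
  proof (induction rule: rtrancl_induct)
    case base
    then show ?case using xy ox by simp
  next
    case (step z z')
    then have z': "z' \<in> R" and ad: "G4_adj n z z'" by auto
    from adj_off[OF ad] have a: "z < n" "z' < n" "off n z z' \<in> {1, 2, n - 1, n - 2}" by auto
    have scn: "sc n p < n" "sc n q < n" using pq n5 unfolding sc_def by auto
    have d: "z' \<noteq> p" "z' \<noteq> sc n p" "z' \<noteq> q" "z' \<noteq> sc n q" using miss z' by auto
    have e: "off n p z' \<noteq> 0" "off n p z' \<noteq> 1" "off n p z' \<noteq> off n p q"
        "off n p z' \<noteq> off n p q + 1"
      using d off_inj[OF pq(1) a(2)] off_self[of n p] m1 m2 pq scn by metis+
    have sh: "off n p z' = (if off n p z + off n z z' < n then off n p z + off n z z' else off n p z + off n z z' - n)"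
      using off_shift[OF pq(1) a(1) a(2)] .
    have "2 \<le> off n p z' \<and> off n p z' < off n p q"
      using step.IH a(3) e sh cn n5 by auto
    then show ?case using z' by simp
  qed
  then show False using oy by simp
qed

lemma sc_pr: "t < n \<Longrightarrow> sc n (pr n t) = t" unfolding sc_def pr_def by auto
lemma pr_sc: "t < n \<Longrightarrow> pr n (sc n t) = t" unfolding sc_def pr_def by auto
lemma sc_lt: "t < n \<Longrightarrow> sc n t < n" unfolding sc_def by auto
lemma pr_lt: "t < n \<Longrightarrow> pr n t < n" unfolding pr_def by auto

lemma off_scu: "p < n \<Longrightarrow> u < n \<Longrightarrow> off n p (sc n u) = (if off n p u + 1 < n then off n p u + 1 else 0)"
  unfolding off_def sc_def by (auto split: if_splits)
lemma off_pru: "p < n \<Longrightarrow> u < n \<Longrightarrow> off n p (pr n u) = (if off n p u = 0 then n - 1 else off n p u - 1)"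
  unfolding off_def pr_def by (auto split: if_splits)
lemma off_prp: "p < n \<Longrightarrow> u < n \<Longrightarrow> off n (pr n p) u = (if off n p u + 1 < n then off n p u + 1 else 0)"
  unfolding off_def pr_def by (auto split: if_splits)
lemma off_neq: "p < n \<Longrightarrow> u < n \<Longrightarrow> w < n \<Longrightarrow> u \<noteq> w \<Longrightarrow> off n p u \<noteq> off n p w"
  using off_inj by blast

lemma arithL:
  assumes n: "n \<ge> 5" and ts: "t < n" "s < n" and h: "s \<noteq> t" "sc n t \<noteq> pr n s" "sc n t \<noteq> s" "sc n s \<noteq> pr n t" "sc n s \<noteq> t"
  shows "2 \<le> off n (pr n t) (sc n t) \<and> off n (pr n t) (sc n t) < off n (pr n t) (pr n s)
    \<and> off n (pr n t) (pr n s) + 1 < off n (pr n t) (sc n s)"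
proof -
  define c where "c = off n t s"
  have cl: "c < n" using off_lt ts c_def by simp
  have h1: "off n t (sc n t) \<noteq> off n t (pr n s)" "off n t (sc n t) \<noteq> c" "off n t (sc n s) \<noteq> off n t (pr n t)"
     "off n t (sc n s) \<noteq> 0" "c \<noteq> 0"
    using h off_neq[OF ts(1)] sc_lt pr_lt ts off_self[of n t] c_def by metis+
  have ot: "off n t t = 0" by (rule off_self)
  note e = off_scu[OF ts(1) ts(1)] off_scu[OF ts(1) ts(2)] off_pru[OF ts(1) ts(1)] off_pru[OF ts(1) ts(2)]
     off_prp[OF ts(1) sc_lt[OF ts(1)]] off_prp[OF ts(1) sc_lt[OF ts(2)]] off_prp[OF ts(1) pr_lt[OF ts(2)]]
  show ?thesis using h1 e ot n cl unfolding c_def[symmetric] by (auto split: if_splits)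
qed

lemma arithR:
  assumes n: "n \<ge> 5" and ts: "t < n" "s < n" and h: "s \<noteq> t" "pr n s \<noteq> t" "pr n s \<noteq> sc n t" "pr n t \<noteq> s" "pr n t \<noteq> sc n s"
  shows "2 \<le> off n t (pr n s) \<and> off n t (pr n s) < off n t s \<and> off n t s + 1 < off n t (pr n t)"
proof -
  define c where "c = off n t s"
  have cl: "c < n" using off_lt ts c_def by simp
  have h1: "off n t (pr n s) \<noteq> 0" "off n t (pr n s) \<noteq> off n t (sc n t)" "off n t (pr n t) \<noteq> c"
     "off n t (pr n t) \<noteq> off n t (sc n s)" "c \<noteq> 0"
    using h off_neq[OF ts(1)] sc_lt pr_lt ts off_self[of n t] c_def by metis+
  have ot: "off n t t = 0" by (rule off_self)
  note e = off_scu[OF ts(1) ts(1)] off_scu[OF ts(1) ts(2)] off_pru[OF ts(1) ts(1)] off_pru[OF ts(1) ts(2)]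
  show ?thesis using h1 e ot n cl unfolding c_def[symmetric] by (auto split: if_splits)
qed

definition LL :: "nat \<Rightarrow> nat set \<Rightarrow> nat \<Rightarrow> bool" where
  "LL n R t \<longleftrightarrow> pr n t \<notin> R \<and> t \<notin> R \<and> sc n t \<in> R"
definition RR :: "nat \<Rightarrow> nat set \<Rightarrow> nat \<Rightarrow> bool" where
  "RR n R t \<longleftrightarrow> pr n t \<in> R \<and> t \<notin> R \<and> sc n t \<notin> R"

lemma LL_uniq:
  assumes conn: "induces_connected n R" and sub: "R \<subseteq> {0..<n}" and n5: "n \<ge> 5"
    and ts: "t < n" "s < n" and L: "LL n R t" "LL n R s"
  shows "t = s"
proof (rule ccontr)
  assume "t \<noteq> s"
  then have h: "s \<noteq> t" "sc n t \<noteq> pr n s" "sc n t \<noteq> s" "sc n s \<noteq> pr n t" "sc n s \<noteq> t"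
    using L unfolding LL_def by auto
  note a = arithL[OF n5 ts h]
  show False
    apply (rule core[OF conn sub n5 pr_lt[OF ts(1)] pr_lt[OF ts(2)] _ _ _ _ _ _ _ _ , of "sc n t" "sc n s"])
    using L a sc_pr ts unfolding LL_def by auto
qed

lemma RR_uniq:
  assumes conn: "induces_connected n R" and sub: "R \<subseteq> {0..<n}" and n5: "n \<ge> 5"
    and ts: "t < n" "s < n" and L: "RR n R t" "RR n R s"
  shows "t = s"
proof (rule ccontr)
  assume "t \<noteq> s"
  then have h: "s \<noteq> t" "pr n s \<noteq> t" "pr n s \<noteq> sc n t" "pr n t \<noteq> s" "pr n t \<noteq> sc n s"
    using L unfolding RR_def by auto
  note a = arithR[OF n5 ts h]
  show False
    apply (rule core[OF conn sub n5 ts _ _ _ _ _ _ _ _ , of "pr n s" "pr n t"])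
    using L a ts unfolding RR_def by auto
qed

lemma block_disj:
  assumes "n \<ge> 5" "j < n div 2" "j' < n div 2"
    "t \<in> {Suc (2*j), sc n (Suc (2*j))}" "t \<in> {Suc (2*j'), sc n (Suc (2*j'))}"
  shows "j = j'"
  using assms unfolding sc_def by (auto split: if_splits; presburger)

lemma neqt: assumes n5: "n \<ge> 5" and j: "j < n div 2" shows "2*j \<noteq> sc n (Suc (2*j))" "2*j \<noteq> sc n (sc n (Suc (2*j)))"
  using j n5 unfolding sc_def by (auto split: if_splits)

lemma map_neq: "map f xs \<noteq> map g xs \<Longrightarrow> \<exists>x\<in>set xs. f x \<noteq> g x"
  by (induction xs) auto

lemma block_exists:
  assumes n5: "n \<ge> 5" and M: "is_G4_measurement_matrix n A" and D: "distinguishes_le2 n A"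
    and j: "j < n div 2"
  shows "\<exists>x. fst x \<in> set A \<and> (\<exists>t\<in>{Suc (2*j), sc n (Suc (2*j))}.
            if snd x then LL n (fst x) t else RR n (fst x) t)"
proof -
  define a where "a = 2*j"
  define v1 where "v1 = Suc a"
  define v2 where "v2 = sc n v1"
  define v3 where "v3 = sc n v2"
  have an: "a < n" "v1 < n" using j n5 unfolding a_def v1_def by auto
  have vn: "v2 < n" "v3 < n" using sc_lt an unfolding v2_def v3_def by auto
  have pv1: "pr n v1 = a" using an unfolding v1_def pr_def by simp
  have pv2: "pr n v2 = v1" unfolding v2_def using pr_sc an by simp
  have sv1: "sc n a = v1" using an unfolding v1_def sc_def by simp
  have neq: "a \<noteq> v2" "a \<noteq> v3" using neqt[OF n5 j] unfolding a_def v1_def v2_def v3_def by auto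
  have XY: "{a, v1} \<noteq> {v2, v3}" using neq by auto
  have c: "card {a, v1} \<le> 2" "card {v2, v3} \<le> 2" by (simp_all add: card_insert_if)
  have s: "{a, v1} \<subseteq> {0..<n}" "{v2, v3} \<subseteq> {0..<n}" using an vn by auto
  have "outcome A {a, v1} \<noteq> outcome A {v2, v3}"
    using D[unfolded distinguishes_le2_def, rule_format, OF s(1) s(2) c(1) c(2) XY] .
  then obtain R where R: "R \<in> set A" and d: "(\<exists>k\<in>R. k \<in> {a, v1}) \<noteq> (\<exists>k\<in>R. k \<in> {v2, v3})"
    using map_neq[of "\<lambda>R. \<exists>j\<in>R. j \<in> {a, v1}" A "\<lambda>R. \<exists>j\<in>R. j \<in> {v2, v3}"]
    unfolding outcome_def by blast
  show ?thesis
  proof (cases "\<exists>k\<in>R. k \<in> {a, v1}")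
    case False
    then have nx: "a \<notin> R" "v1 \<notin> R" by auto
    have "v2 \<in> R \<or> v3 \<in> R" using d False by auto
    then show ?thesis
    proof
      assume "v2 \<in> R"
      then have "LL n R v1" using nx pv1 unfolding LL_def v2_def by simp
      then show ?thesis using R unfolding v1_def a_def by (intro exI[of _ "(R, True)"]) auto
    next
      assume h: "v3 \<in> R"
      show ?thesis
      proof (cases "v2 \<in> R")
        case True
        then have "LL n R v1" using nx pv1 unfolding LL_def v2_def by simp
        then show ?thesis using R unfolding v1_def a_def by (intro exI[of _ "(R, True)"]) auto
      next
        case False
        then have "LL n R v2" using nx pv2 h unfolding LL_def v3_def by simp
        then show ?thesis using R unfolding v2_def v1_def a_def by (intro exI[of _ "(R, True)"]) auto
      qed
    qed
  next
    case True
    then have ny: "v2 \<notin> R" "v3 \<notin> R" using d by auto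
    show ?thesis
    proof (cases "v1 \<in> R")
      case True
      then have "RR n R v2" using ny pv2 unfolding RR_def v3_def by simp
      then show ?thesis using R unfolding v2_def v1_def a_def by (intro exI[of _ "(R, False)"]) auto
    next
      case False
      then have "a \<in> R" using \<open>\<exists>k\<in>R. k \<in> {a, v1}\<close> by auto
      then have "RR n R v1" using ny pv1 False unfolding RR_def v2_def by simp
      then show ?thesis using R unfolding v1_def a_def by (intro exI[of _ "(R, False)"]) auto
    qed
  qed
qed

theorem proposition1:
  fixes n :: nat and A :: "nat set list"
  assumes "n \<ge> 5"
    and "is_G4_measurement_matrix n A"
    and "distinguishes_le2 n A"
  shows "length A \<ge> n div 4"
proof -
  note n5 = assms(1) and M = assms(2)
  define B where "B j = {Suc (2*j), sc n (Suc (2*j))}" for j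
  have "\<forall>j\<in>{..<n div 2}. \<exists>x. fst x \<in> set A \<and> (\<exists>t\<in>B j. if snd x then LL n (fst x) t else RR n (fst x) t)"
    using block_exists[OF assms] unfolding B_def by auto
  from bchoice[OF this] obtain g where g0: "\<forall>j\<in>{..<n div 2}. fst (g j) \<in> set A \<and>
      (\<exists>t\<in>B j. if snd (g j) then LL n (fst (g j)) t else RR n (fst (g j)) t)"
    by blast
  have g: "\<And>j. j \<in> {..<n div 2} \<Longrightarrow> fst (g j) \<in> set A \<and>
      (\<exists>t\<in>B j. if snd (g j) then LL n (fst (g j)) t else RR n (fst (g j)) t)"
    using g0 by blast
  have Bn: "\<And>j t. j < n div 2 \<Longrightarrow> t \<in> B j \<Longrightarrow> t < n"
  proof -
    fix j t assume "j < n div 2" "t \<in> B j"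
    then have "Suc (2*j) < n" "t = Suc (2*j) \<or> t = sc n (Suc (2*j))" unfolding B_def by auto
    then show "t < n" using sc_lt by auto
  qed
  have inj: "inj_on g {..<n div 2}"
  proof (rule inj_onI)
    fix j j' assume jj: "j \<in> {..<n div 2}" "j' \<in> {..<n div 2}" and e: "g j = g j'"
    obtain t where t: "t \<in> B j" "if snd (g j) then LL n (fst (g j)) t else RR n (fst (g j)) t"
      using g[OF jj(1)] by blast
    obtain t' where t': "t' \<in> B j'" "if snd (g j) then LL n (fst (g j)) t' else RR n (fst (g j)) t'"
      using g[OF jj(2)] e by metis
    define R where "R = fst (g j)"
    have RA: "R \<in> set A" using g[OF jj(1)] R_def by simp
    have sub: "R \<subseteq> {0..<n}" using M RA unfolding is_G4_measurement_matrix_def by auto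
    have tn: "t < n" "t' < n" using Bn jj t t' by auto
    have "t = t'"
    proof (cases "snd (g j)")
      case True
      then have L: "LL n R t" "LL n R t'" using t t' R_def by auto
      then have "R \<noteq> {}" unfolding LL_def by auto
      then have "induces_connected n R" using M RA unfolding is_G4_measurement_matrix_def by auto
      then show ?thesis using LL_uniq sub n5 tn L by blast
    next
      case False
      then have L: "RR n R t" "RR n R t'" using t t' R_def by auto
      then have "R \<noteq> {}" unfolding RR_def by auto
      then have "induces_connected n R" using M RA unfolding is_G4_measurement_matrix_def by auto
      then show ?thesis using RR_uniq sub n5 tn L by blast
    qed
    then show "j = j'" using block_disj[OF n5, of j j' t] jj t(1) t'(1) unfolding B_def by simp
  qed
  have img: "g ` {..<n div 2} \<subseteq> set A \<times> (UNIV :: bool set)"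
  proof
    fix x assume "x \<in> g ` {..<n div 2}"
    then obtain j where "j \<in> {..<n div 2}" "x = g j" by blast
    then show "x \<in> set A \<times> (UNIV :: bool set)" using g[of j] by (simp add: mem_Times_iff)
  qed
  have "n div 2 \<le> card (set A \<times> (UNIV :: bool set))"
    using card_inj_on_le[OF inj img] by simp
  also have "\<dots> = card (set A) * 2" by (simp add: card_cartesian_product)
  also have "\<dots> \<le> length A * 2" using card_length by simp
  finally show ?thesis by linarith
qed

end
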